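(* Let $A=\mathbb{C}[x,y,z]$ and let $a,b,c,d\in A$ with $d\neq 0$. Then the triples $c\,\mathrm{grad}(a)$ and $d\,\mathrm{grad}(b)$ are compatible if and only if $\det \mathrm{Jac}(a,b,cd^{-1})=0$ (in $Q(A)$).
   Context: $\mathrm{grad}(a)=(a_x,a_y,a_z)$, subscripts being partial derivatives, and $\mathrm{Jac}(f,g,h)$ is the $3\times3$ matrix with rows $\mathrm{grad}(f),\mathrm{grad}(g),\mathrm{grad}(h)$. A triple $F=(f,g,h)$ is a Poisson triple if there is a Poisson bracket with $\{y,z\}=f$, $\{z,x\}=g$, $\{x,y\}=h$. Two Poisson triples $F,G$ are compatible if $\lambda F+\mu G$ is a Poisson triple for all $\lambda,\mu\in\mathbb{C}$. *)

theory Defs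
  imports "HOL-Computational_Algebra.Polynomial" "HOL-Computational_Algebra.Fraction_Field"
begin

text \<open>A = C[x,y,z], realised as nested univariate polynomials: the outermost
  variable is z, the middle one y, the innermost one x.\<close>
type_synonym A = "complex poly poly poly"

definition const3 :: "complex \<Rightarrow> A" where
  "const3 c = [:[:[:c:]:]:]"

definition varx :: A where "varx = [:[:[:0, 1:]:]:]"
definition vary :: A where "vary = [:[:0, 1:]:]"
definition varz :: A where "varz = [:0, 1:]"

definition dx :: "A \<Rightarrow> A" where "dx p = map_poly (map_poly pderiv) p"
definition dy :: "A \<Rightarrow> A" where "dy p = map_poly pderiv p"
definition dz :: "A \<Rightarrow> A" where "dz p = pderiv p"

definition grad :: "A \<Rightarrow> A \<times> A \<times> A" where
  "grad a = (dx a, dy a, dz a)"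

definition scale3 :: "A \<Rightarrow> A \<times> A \<times> A \<Rightarrow> A \<times> A \<times> A" where
  "scale3 c F = (case F of (f, g, h) \<Rightarrow> (c * f, c * g, c * h))"

definition poisson_bracket :: "(A \<Rightarrow> A \<Rightarrow> A) \<Rightarrow> bool" where
  "poisson_bracket br \<longleftrightarrow>
     (\<forall>p q r. br (p + q) r = br p r + br q r) \<and>
     (\<forall>c p q. br (const3 c * p) q = const3 c * br p q) \<and>
     (\<forall>p q. br p q = - br q p) \<and>
     (\<forall>p q r. br p (q * r) = br p q * r + q * br p r) \<and>
     (\<forall>p q r. br p (br q r) + br q (br r p) + br r (br p q) = 0)"

definition poisson_triple :: "A \<times> A \<times> A \<Rightarrow> bool" where
  "poisson_triple F \<longleftrightarrow> (case F of (f, g, h) \<Rightarrow>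
     (\<exists>br. poisson_bracket br \<and> br vary varz = f \<and> br varz varx = g \<and> br varx vary = h))"

definition lincomb3 :: "complex \<Rightarrow> A \<times> A \<times> A \<Rightarrow> complex \<Rightarrow> A \<times> A \<times> A \<Rightarrow> A \<times> A \<times> A" where
  "lincomb3 l F m G = (case F of (f1, g1, h1) \<Rightarrow> case G of (f2, g2, h2) \<Rightarrow>
     (const3 l * f1 + const3 m * f2, const3 l * g1 + const3 m * g2, const3 l * h1 + const3 m * h2))"

definition compatible :: "A \<times> A \<times> A \<Rightarrow> A \<times> A \<times> A \<Rightarrow> bool" where
  "compatible F G \<longleftrightarrow> (\<forall>l m. poisson_triple (lincomb3 l F m G))"

definition emb :: "A \<Rightarrow> A fract" where "emb p = Fract p 1"

definition fderiv :: "(A \<Rightarrow> A) \<Rightarrow> A fract \<Rightarrow> A fract" where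
  "fderiv D r = (SOME s. \<exists>p q. q \<noteq> 0 \<and> r = Fract p q \<and> s = Fract (D p * q - p * D q) (q ^ 2))"

definition fgrad :: "A fract \<Rightarrow> A fract \<times> A fract \<times> A fract" where
  "fgrad r = (fderiv dx r, fderiv dy r, fderiv dz r)"

definition det3 :: "'a::comm_ring_1 \<times> 'a \<times> 'a \<Rightarrow> 'a \<times> 'a \<times> 'a \<Rightarrow> 'a \<times> 'a \<times> 'a \<Rightarrow> 'a" where
  "det3 u v w = (case u of (u1, u2, u3) \<Rightarrow> case v of (v1, v2, v3) \<Rightarrow> case w of (w1, w2, w3) \<Rightarrow>
     u1 * (v2 * w3 - v3 * w2) - u2 * (v1 * w3 - v3 * w1) + u3 * (v1 * w2 - v2 * w1))"

definition detJac :: "A fract \<Rightarrow> A fract \<Rightarrow> A fract \<Rightarrow> A fract" where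
  "detJac f g h = det3 (fgrad f) (fgrad g) (fgrad h)"

end

theory Submission imports Defs begin

lemma add_zero_gen: fixes D :: "'b::ab_group_add \<Rightarrow> 'a::ab_group_add"
  assumes "\<And>x y. D (x + y) = D x + D y" shows "D 0 = 0"
proof - have "D (0+0) = D 0 + D 0" by (rule assms) thus ?thesis by simp qed

lemma add_sum_gen: fixes D :: "'a::ab_group_add \<Rightarrow> 'a" assumes "\<And>x y. D (x + y) = D x + D y"
  shows "D (sum f S) = (\<Sum>i\<in>S. D (f i))"
proof (cases "finite S")
  case True thus ?thesis by (induction S rule: finite_induct) (simp_all add: assms add_zero_gen[OF assms])
next
  case False thus ?thesis by (simp add: add_zero_gen[OF assms])
qed

lemma add_ofnat_gen: fixes D :: "'a::idom \<Rightarrow> 'a" assumes "\<And>x y. D (x + y) = D x + D y"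
  shows "D (of_nat k * x) = of_nat k * (D x :: 'a::idom)"
  by (induction k) (simp_all add: add_zero_gen[OF assms] assms algebra_simps)

lemma map_poly_add_gen: fixes D :: "'a::idom \<Rightarrow> 'a" assumes "\<And>x y. D (x + y) = D x + D y"
  shows "map_poly D (p + q) = map_poly D p + map_poly D (q::'a::idom poly)"
  by (intro poly_eqI) (simp add: coeff_map_poly add_zero_gen[OF assms] assms)

lemma map_poly_mult_gen: fixes D :: "'a::idom \<Rightarrow> 'a" assumes "\<And>x y. D (x + y) = D x + D y"
  and "\<And>x y. D (x * y) = D x * y + x * D y"
  shows "map_poly D (p * q) = map_poly D p * q + p * map_poly D (q::'a::idom poly)"
  by (intro poly_eqI) (simp add: coeff_map_poly add_zero_gen[OF assms(1)] assms coeff_mult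
        add_sum_gen[OF assms(1)] sum.distrib)

lemma pderiv_map_poly_gen: fixes D :: "'a::idom \<Rightarrow> 'a" assumes "\<And>x y. D (x + y) = D x + D y"
  shows "pderiv (map_poly D p) = map_poly D (pderiv (p::'a::idom poly))"
  by (intro poly_eqI) (simp add: coeff_map_poly add_zero_gen[OF assms] coeff_pderiv add_ofnat_gen[OF assms] del: of_nat_Suc)

lemma dy_add: "dy (p + q) = dy p + dy q"
  unfolding dy_def by (rule map_poly_add_gen) (rule pderiv_add)
lemma dy_mult: "dy (p * q) = dy p * q + p * dy q"
  unfolding dy_def by (rule map_poly_mult_gen) (simp_all add: pderiv_add pderiv_mult algebra_simps)
lemma mpd_add: "map_poly pderiv (p + q) = map_poly pderiv p + map_poly pderiv (q :: complex poly poly)"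
  by (rule map_poly_add_gen) (rule pderiv_add)
lemma mpd_mult: "map_poly pderiv (p * q) = map_poly pderiv p * q + p * map_poly pderiv (q :: complex poly poly)"
  by (rule map_poly_mult_gen) (simp_all add: pderiv_add pderiv_mult algebra_simps)
lemma dx_add: "dx (p + q) = dx p + dx q"
  unfolding dx_def by (rule map_poly_add_gen) (rule mpd_add)
lemma dx_mult: "dx (p * q) = dx p * q + p * dx q"
  unfolding dx_def by (rule map_poly_mult_gen) (simp_all add: mpd_add mpd_mult)
lemma dz_add: "dz (p + q) = dz p + dz q"
  unfolding dz_def by (rule pderiv_add)
lemma dz_mult: "dz (p * q) = dz p * q + p * dz q"
  unfolding dz_def by (simp add: pderiv_mult algebra_simps)

lemma dy_dx: "dy (dx p) = dx (dy p)"
proof -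
  have "dy (dx p) = map_poly (pderiv \<circ> map_poly pderiv) p"
    unfolding dx_def dy_def by (simp add: map_poly_map_poly)
  also have "\<dots> = map_poly (map_poly pderiv \<circ> pderiv) p"
    by (rule map_poly_cong) (simp add: pderiv_map_poly_gen pderiv_add)
  also have "\<dots> = dx (dy p)"
    unfolding dx_def dy_def by (simp add: map_poly_map_poly)
  finally show ?thesis .
qed
lemma dz_dx: "dz (dx p) = dx (dz p)"
  unfolding dx_def dz_def by (rule pderiv_map_poly_gen) (rule mpd_add)
lemma dz_dy: "dz (dy p) = dy (dz p)"
  unfolding dy_def dz_def by (rule pderiv_map_poly_gen) (rule pderiv_add)

lemma dx_minus: "dx (- p) = - dx p"
proof - have "dx p + dx (-p) = dx 0" using dx_add[of p "-p"] by simp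
  also have "dx 0 = 0" by (simp add: dx_def)
  finally show ?thesis by (metis neg_eq_iff_add_eq_0) qed
lemma dy_minus: "dy (- p) = - dy p"
proof - have "dy p + dy (-p) = dy 0" using dy_add[of p "-p"] by simp
  also have "dy 0 = 0" by (simp add: dy_def)
  finally show ?thesis by (metis neg_eq_iff_add_eq_0) qed
lemma dz_minus: "dz (- p) = - dz p"
proof - have "dz p + dz (-p) = dz 0" using dz_add[of p "-p"] by simp
  also have "dz 0 = 0" by (simp add: dz_def)
  finally show ?thesis by (metis neg_eq_iff_add_eq_0) qed
lemma dx_diff: "dx (p - q) = dx p - dx q" using dx_add[of p "-q"] dx_minus[of q] by simp
lemma dy_diff: "dy (p - q) = dy p - dy q" using dy_add[of p "-q"] dy_minus[of q] by simp
lemma dz_diff: "dz (p - q) = dz p - dz q" using dz_add[of p "-q"] dz_minus[of q] by simp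

lemmas drules = dx_add dy_add dz_add dx_mult dy_mult dz_mult dx_minus dy_minus dz_minus
  dx_diff dy_diff dz_diff dy_dx dz_dx dz_dy

definition pb :: "A \<times> A \<times> A \<Rightarrow> A \<Rightarrow> A \<Rightarrow> A" where
  "pb H p q = (case H of (h1,h2,h3) \<Rightarrow> h1*(dy p*dz q - dz p*dy q) + h2*(dz p*dx q - dx p*dz q) + h3*(dx p*dy q - dy p*dx q))"
definition KK :: "A \<times> A \<times> A \<Rightarrow> A" where
  "KK H = (case H of (h1,h2,h3) \<Rightarrow> h1*(dy h3 - dz h2) + h2*(dz h1 - dx h3) + h3*(dx h2 - dy h1))"

lemma pb_jacobi: "pb (h1,h2,h3) p (pb (h1,h2,h3) q r) + pb (h1,h2,h3) q (pb (h1,h2,h3) r p) + pb (h1,h2,h3) r (pb (h1,h2,h3) p q) = - KK (h1,h2,h3) * det3 (grad p) (grad q) (grad r)"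
  unfolding pb_def KK_def det3_def grad_def by (simp add: drules) algebra

lemma dconst: "dx (const3 c) = 0" "dy (const3 c) = 0" "dz (const3 c) = 0"
  by (simp_all add: dx_def dy_def dz_def const3_def pderiv_pCons map_poly_pCons)
lemma dvars: "dx varx = 1" "dx vary = 0" "dx varz = 0" "dy varx = 0" "dy vary = 1" "dy varz = 0"
   "dz varx = 0" "dz vary = 0" "dz varz = 1"
  by (simp_all add: dx_def dy_def dz_def varx_def vary_def varz_def pderiv_pCons map_poly_pCons one_pCons)
lemma const3_1: "const3 1 = 1" by (simp add: const3_def one_pCons)

lemma pb_poisson: assumes "KK (h1,h2,h3) = 0" shows "poisson_bracket (pb (h1,h2,h3))"
  unfolding poisson_bracket_def
proof (intro conjI allI)
  fix p q r :: A and c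
  show "pb (h1, h2, h3) (p + q) r = pb (h1, h2, h3) p r + pb (h1, h2, h3) q r"
    unfolding pb_def by (simp add: drules) algebra
  show "pb (h1, h2, h3) (const3 c * p) q = const3 c * pb (h1, h2, h3) p q"
    unfolding pb_def by (simp add: drules dconst) algebra
  show "pb (h1, h2, h3) p q = - pb (h1, h2, h3) q p"
    unfolding pb_def by (simp add: drules) algebra
  show "pb (h1, h2, h3) p (q * r) = pb (h1, h2, h3) p q * r + q * pb (h1, h2, h3) p r"
    unfolding pb_def by (simp add: drules) algebra
  show "pb (h1, h2, h3) p (pb (h1, h2, h3) q r) + pb (h1, h2, h3) q (pb (h1, h2, h3) r p) +
     pb (h1, h2, h3) r (pb (h1, h2, h3) p q) = 0"
    using pb_jacobi assms by simp
qed

lemma A_induct[case_names const x y z add mult]: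
  assumes const: "\<And>c. P (const3 c)" and x: "P varx" and y: "P vary" and z: "P varz"
    and add: "\<And>p q. P p \<Longrightarrow> P q \<Longrightarrow> P (p + q)" and mult: "\<And>p q. P p \<Longrightarrow> P q \<Longrightarrow> P (p * q)"
  shows "P f"
proof -
  have 1: "P [:[:b:]:]" for b
  proof (induction b rule: pCons_induct)
    case 0 then show ?case using const[of 0] by (simp add: const3_def)
  next
    case (pCons e b)
    have "[:[:pCons e b:]:] = const3 e + varx * [:[:b:]:]"
      by (simp add: const3_def varx_def)
    then show ?case by (metis const x pCons(2) add mult)
  qed
  have 2: "P [:a:]" for a
  proof (induction a rule: pCons_induct)
    case 0 then show ?case using 1[of 0] by simp
  next
    case (pCons b a)
    have "[:pCons b a:] = [:[:b:]:] + vary * [:a:]"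
      by (simp add: vary_def)
    then show ?case by (metis 1 y pCons(2) add mult)
  qed
  show ?thesis
  proof (induction f rule: pCons_induct)
    case 0 then show ?case using 2[of 0] by simp
  next
    case (pCons a f)
    have "pCons a f = [:a:] + varz * f"
      by (simp add: varz_def)
    then show ?case by (metis 2 z pCons(2) add mult)
  qed
qed

lemma deriv_char:
  assumes hadd: "\<And>x y. D (x+y) = D x + D y" and mul: "\<And>x y. D (x*y) = D x * y + x * D y"
    and con: "\<And>c. D (const3 c) = 0"
  shows "D f = dx f * D varx + dy f * D vary + dz f * D varz"
proof (induction f rule: A_induct)
  case (const c) then show ?case by (simp add: con dconst)
next
  case x then show ?case by (simp add: dvars)
next
  case y then show ?case by (simp add: dvars)
next
  case z then show ?case by (simp add: dvars)
next
  case (add p q) then show ?case by (simp add: hadd drules algebra_simps)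
next
  case (mult p q) then show ?case by (simp add: mul drules algebra_simps)
qed

lemma poisson_triple_iff: "poisson_triple (h1,h2,h3) \<longleftrightarrow> KK (h1,h2,h3) = 0"
proof
  assume "KK (h1,h2,h3) = 0"
  then have "poisson_bracket (pb (h1,h2,h3))" by (rule pb_poisson)
  moreover have "pb (h1,h2,h3) vary varz = h1" "pb (h1,h2,h3) varz varx = h2" "pb (h1,h2,h3) varx vary = h3"
    by (simp_all add: pb_def dvars)
  ultimately show "poisson_triple (h1,h2,h3)" unfolding poisson_triple_def by auto
next
  assume "poisson_triple (h1,h2,h3)"
  then obtain br where pb: "poisson_bracket br" and v: "br vary varz = h1" "br varz varx = h2" "br varx vary = h3"
    unfolding poisson_triple_def by auto
  have ad1: "br (p+q) r = br p r + br q r" for p q r using pb unfolding poisson_bracket_def by blast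
  have sc: "br (const3 c * p) q = const3 c * br p q" for c p q using pb unfolding poisson_bracket_def by blast
  have as: "br p q = - br q p" for p q using pb unfolding poisson_bracket_def by blast
  have le: "br p (q * r) = br p q * r + q * br p r" for p q r using pb unfolding poisson_bracket_def by blast
  have ja: "br p (br q r) + br q (br r p) + br r (br p q) = 0" for p q r using pb unfolding poisson_bracket_def by blast
  have ad2: "br p (q+r) = br p q + br p r" for p q r using ad1[of q r p] as by (metis minus_add_distrib)
  have one: "br p 1 = 0" for p using le[of p 1 1] by simp
  have con: "br p (const3 c) = 0" for p c
  proof -
    have "br p (const3 c) = - br (const3 c * 1) p" using as[of p "const3 c"] by simp
    also have "\<dots> = - (const3 c * br 1 p)" using sc[of c 1 p] by simp
    also have "br 1 p = 0" using as[of 1 p] one[of p] by simp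
    finally show ?thesis by simp
  qed
  have ch: "br p f = dx f * br p varx + dy f * br p vary + dz f * br p varz" for p f
    by (rule deriv_char) (simp_all add: ad2 le con)
  have self: "br p p = 0" for p using as[of p p] by simp
  have "0 = br varx (br vary varz) + br vary (br varz varx) + br varz (br varx vary)" using ja by simp
  also have "\<dots> = br varx h1 + br vary h2 + br varz h3" using v by simp
  also have "\<dots> = - KK (h1,h2,h3)"
    apply (subst (1 2 3) ch)
    using v as[of varx varz] as[of vary varx] as[of varz vary] self
    by (simp add: KK_def algebra_simps)
  finally show "KK (h1,h2,h3) = 0" by simp
qed

definition XX :: "A \<Rightarrow> A \<Rightarrow> A \<Rightarrow> A \<Rightarrow> A" where
  "XX a b c d = d * det3 (grad a) (grad b) (grad c) - c * det3 (grad a) (grad b) (grad d)"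

lemma KK_lincomb: "KK (lincomb3 l (scale3 c (grad a)) m (scale3 d (grad b))) = const3 l * const3 m * XX a b c d"
  unfolding KK_def lincomb3_def scale3_def grad_def XX_def det3_def
  by (simp add: drules dconst) algebra

lemma compatible_iff: "compatible (scale3 c (grad a)) (scale3 d (grad b)) \<longleftrightarrow> XX a b c d = 0"
proof -
  have "compatible (scale3 c (grad a)) (scale3 d (grad b)) \<longleftrightarrow> (\<forall>l m. KK (lincomb3 l (scale3 c (grad a)) m (scale3 d (grad b))) = 0)"
    unfolding compatible_def
    by (metis poisson_triple_iff prod_cases3)
  also have "\<dots> \<longleftrightarrow> XX a b c d = 0"
    unfolding KK_lincomb using const3_1 by (metis mult_1 mult_zero_right)
  finally show ?thesis .
qed

lemma fderiv_Fract:
  assumes hadd: "\<And>x y. D (x+y) = D x + D y" and mul: "\<And>x y. D (x*y) = D x * y + x * D y"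
    and q0: "q0 \<noteq> 0"
  shows "fderiv D (Fract p0 q0) = Fract (D p0 * q0 - p0 * D q0) (q0 ^ 2)"
  unfolding fderiv_def
proof (rule someI2)
  show "\<exists>p q. q \<noteq> 0 \<and> Fract p0 q0 = Fract p q \<and> Fract (D p0 * q0 - p0 * D q0) (q0 ^ 2) = Fract (D p * q - p * D q) (q ^ 2)"
    using q0 by blast
next
  fix s assume "\<exists>p q. q \<noteq> 0 \<and> Fract p0 q0 = Fract p q \<and> s = Fract (D p * q - p * D q) (q ^ 2)"
  then obtain p q where q: "q \<noteq> 0" and e: "Fract p0 q0 = Fract p q" and s: "s = Fract (D p * q - p * D q) (q ^ 2)"
    by blast
  have e1: "p0 * q = p * q0" using e q q0 by (simp add: eq_fract)
  have e2: "D p0 * q + p0 * D q = D p * q0 + p * D q0" using arg_cong[OF e1, of D] by (simp add: mul)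
  have "(D p * q - p * D q) * q0 ^ 2 = (D p0 * q0 - p0 * D q0) * q ^ 2"
    using e1 e2 by algebra
  then show "s = Fract (D p0 * q0 - p0 * D q0) (q0 ^ 2)"
    using q q0 s by (simp add: eq_fract)
qed

lemma emb_ops: "emb (p + q) = emb p + emb q" "emb (p * q) = emb p * emb q" "emb (p - q) = emb p - emb q"
  by (simp_all add: emb_def)

lemma dxm: "dx (p*q) = dx p * q + p * dx q" by (rule dx_mult)

lemma detJac_eq:
  assumes d: "d \<noteq> 0"
  shows "detJac (emb a) (emb b) (emb c * inverse (emb d)) = emb (XX a b c d) * inverse (emb (d^2))"
proof -
  have one: "dx 1 = 0" "dy 1 = 0" "dz 1 = 0" using dconst[of 1] by (simp_all add: const3_1)
  have fr: "Fract p q = emb p * inverse (emb q)" if "q \<noteq> 0" for p q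
    using that by (simp add: emb_def)
  have ga: "fgrad (emb a) = (emb (dx a), emb (dy a), emb (dz a))" and
       gb: "fgrad (emb b) = (emb (dx b), emb (dy b), emb (dz b))"
    unfolding fgrad_def emb_def
    by (simp_all add: fderiv_Fract[where D=dx] fderiv_Fract[where D=dy] fderiv_Fract[where D=dz]
        dx_add dy_add dz_add dx_mult dy_mult dz_mult one)
  have cd: "emb c * inverse (emb d) = Fract c d" using d by (simp add: emb_def)
  have gc: "fgrad (emb c * inverse (emb d)) =
    (emb (dx c * d - c * dx d) * inverse (emb (d^2)), emb (dy c * d - c * dy d) * inverse (emb (d^2)),
     emb (dz c * d - c * dz d) * inverse (emb (d^2)))"
  proof -
    have d2: "d^2 \<noteq> 0" using d by simp
    show ?thesis
    unfolding fgrad_def cd using d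
    by (simp add: fderiv_Fract[where D=dx] fderiv_Fract[where D=dy] fderiv_Fract[where D=dz]
        dx_add dy_add dz_add dx_mult dy_mult dz_mult fr[OF d2] del: power2_eq_square)
  qed
  show ?thesis
    unfolding detJac_def ga gb gc XX_def det3_def grad_def
    by (simp add: emb_ops) algebra
qed

theorem proposition1p21:
  fixes a b c d :: A
  assumes "d \<noteq> 0"
  shows "compatible (scale3 c (grad a)) (scale3 d (grad b)) \<longleftrightarrow>
         detJac (emb a) (emb b) (emb c * inverse (emb d)) = 0"
proof -
  have nz: "emb (d^2) \<noteq> 0" using assms by (simp add: emb_def eq_fract Zero_fract_def)
  have ez: "emb x = 0 \<longleftrightarrow> x = 0" for x by (simp add: emb_def eq_fract Zero_fract_def)
  show ?thesis unfolding compatible_iff detJac_eq[OF assms] using nz ez by simp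
qed

end
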